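(* Let $R$ be a principal ideal domain. For any two strata $S,T$ of $\mathfrak{A}_2$ and every $q>0$, $\operatorname{Ext}^q_{\operatorname{Rep}(Q_{\mathfrak{A}_2},\rho_{\mathfrak{A}_2})}(I_S,I_T)=0$.
   Context: $\mathfrak{A}_2$ is the stratification of $S^2$ into two points $P_1,P_2$ on a great circle, the two open arcs $E_1,E_2$ between them, and the two open hemispheres $H_1,H_2$. Its quiver $(Q_{\mathfrak{A}_2},\rho_{\mathfrak{A}_2})$ has one vertex per stratum, an arrow $S\to T$ whenever $S\subsetneq\overline{T}$ (namely $P_i\to E_j$, $E_j\to H_k$, $P_i\to H_k$), and relations identifying all paths with the same endpoints; $\operatorname{Rep}$ denotes the category of representations by $R$-modules satisfying the relations. For a stratum $S$, $I_S$ is the representation with $R$ at $S$ and at every vertex $T$ with $T\subset\overline{S}$ (i.e. having a path to $S$), $0$ at all other vertices, identity maps on arrows between vertices carrying $R$ and zero maps otherwise; it corresponds to the sheaf $i_!R_{\overline S}$, $i:\overline S\hookrightarrow S^2$. *)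

theory Defs
  imports "HOL-Algebra.Algebra"
begin

datatype stratum = P1 | P2 | E1 | E2 | H1 | H2

text \<open>Arrows S -> T whenever S is properly contained in the closure of T.\<close>
definition arrow :: "stratum \<Rightarrow> stratum \<Rightarrow> bool" where
  "arrow S T \<longleftrightarrow> (S \<in> {P1, P2} \<and> T \<in> {E1, E2, H1, H2}) \<or> (S \<in> {E1, E2} \<and> T \<in> {H1, H2})"

text \<open>S is contained in the closure of T (there is a path, possibly trivial, from S to T).\<close>
definition sleq :: "stratum \<Rightarrow> stratum \<Rightarrow> bool" where
  "sleq S T \<longleftrightarrow> S = T \<or> arrow S T"

text \<open>A representation: a module at each vertex and a map for each arrow
  (the value of the map component at non-arrows is irrelevant).\<close>
type_synonym ('r, 'a) qrep = "(stratum \<Rightarrow> ('r, 'a) module) \<times> (stratum \<Rightarrow> stratum \<Rightarrow> 'a \<Rightarrow> 'a)"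

definition is_hom :: "'r ring \<Rightarrow> ('r, 'a) module \<Rightarrow> ('r, 'b) module \<Rightarrow> ('a \<Rightarrow> 'b) \<Rightarrow> bool" where
  "is_hom R M N h \<longleftrightarrow> h \<in> carrier M \<rightarrow> carrier N
     \<and> (\<forall>x \<in> carrier M. \<forall>y \<in> carrier M. h (x \<oplus>\<^bsub>M\<^esub> y) = h x \<oplus>\<^bsub>N\<^esub> h y)
     \<and> (\<forall>a \<in> carrier R. \<forall>x \<in> carrier M. h (a \<odot>\<^bsub>M\<^esub> x) = a \<odot>\<^bsub>N\<^esub> h x)"

text \<open>Representations satisfying the relations (all paths with the same endpoints agree).
  The only paths of length >= 2 are P -> E -> H, which must agree with the arrow P -> H.\<close>
definition is_rep :: "'r ring \<Rightarrow> ('r, 'a) qrep \<Rightarrow> bool" where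
  "is_rep R F \<longleftrightarrow> (\<forall>S. module R (fst F S))
     \<and> (\<forall>S T. arrow S T \<longrightarrow> is_hom R (fst F S) (fst F T) (snd F S T))
     \<and> (\<forall>S T U. arrow S T \<and> arrow T U \<longrightarrow>
          (\<forall>x \<in> carrier (fst F S). snd F T U (snd F S T x) = snd F S U x))"

definition is_morph :: "'r ring \<Rightarrow> ('r, 'a) qrep \<Rightarrow> ('r, 'b) qrep \<Rightarrow> (stratum \<Rightarrow> 'a \<Rightarrow> 'b) \<Rightarrow> bool" where
  "is_morph R F G \<phi> \<longleftrightarrow> (\<forall>S. is_hom R (fst F S) (fst G S) (\<phi> S))
     \<and> (\<forall>S T. arrow S T \<longrightarrow>
          (\<forall>x \<in> carrier (fst F S). \<phi> T (snd F S T x) = snd G S T (\<phi> S x)))"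

definition Rmod :: "'r ring \<Rightarrow> ('r, 'r) module" where
  "Rmod R = ring.extend R (module.fields (\<lambda>a x. a \<otimes>\<^bsub>R\<^esub> x))"

definition Zmod :: "'r ring \<Rightarrow> ('r, 'r) module" where
  "Zmod R = (Rmod R)\<lparr>carrier := {\<zero>\<^bsub>R\<^esub>}\<rparr>"

definition I_rep :: "'r ring \<Rightarrow> stratum \<Rightarrow> ('r, 'r) qrep" where
  "I_rep R S = ((\<lambda>T. if sleq T S then Rmod R else Zmod R),
                (\<lambda>T U. if sleq T S \<and> sleq U S then (\<lambda>x. x) else (\<lambda>x. \<zero>\<^bsub>R\<^esub>)))"

text \<open>Transport along the (unique) path from S to T; identity if S = T.\<close>
definition path_map :: "('r, 'a) qrep \<Rightarrow> stratum \<Rightarrow> stratum \<Rightarrow> 'a \<Rightarrow> 'a" where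
  "path_map F S T x = (if S = T then x else snd F S T x)"

text \<open>Equivalently F is a direct sum of representable
  (projective) representations P_S.\<close>
definition is_free_on :: "'r ring \<Rightarrow> ('r, 'a) qrep \<Rightarrow> (stratum \<times> 'a) set \<Rightarrow> bool" where
  "is_free_on R F B \<longleftrightarrow> (\<forall>p \<in> B. snd p \<in> carrier (fst F (fst p)))
     \<and> (\<forall>T. \<forall>x \<in> carrier (fst F T). \<exists>!c.
          (\<forall>p. p \<notin> {p \<in> B. sleq (fst p) T} \<longrightarrow> c p = \<zero>\<^bsub>R\<^esub>)
        \<and> (\<forall>p \<in> {p \<in> B. sleq (fst p) T}. c p \<in> carrier R)
        \<and> finite {p \<in> B. sleq (fst p) T \<and> c p \<noteq> \<zero>\<^bsub>R\<^esub>}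
        \<and> x = finsum (fst F T) (\<lambda>p. c p \<odot>\<^bsub>fst F T\<^esub> path_map F (fst p) T (snd p))
                 {p \<in> B. sleq (fst p) T \<and> c p \<noteq> \<zero>\<^bsub>R\<^esub>})"

text \<open>A free resolution  ... -> F 2 --d 1--> F 1 --d 0--> F 0 --eps--> A -> 0
  (exactness in Rep is vertexwise).\<close>
definition free_resolution :: "'r ring \<Rightarrow> ('r, 'x) qrep \<Rightarrow> (nat \<Rightarrow> ('r, 'a) qrep)
     \<Rightarrow> (nat \<Rightarrow> stratum \<Rightarrow> 'a \<Rightarrow> 'a) \<Rightarrow> (stratum \<Rightarrow> 'a \<Rightarrow> 'x) \<Rightarrow> bool" where
  "free_resolution R A F d eps \<longleftrightarrow>
     (\<forall>n. is_rep R (F n) \<and> (\<exists>B. is_free_on R (F n) B))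
   \<and> (\<forall>n. is_morph R (F (Suc n)) (F n) (d n))
   \<and> is_morph R (F 0) A eps
   \<and> (\<forall>S. eps S ` carrier (fst (F 0) S) = carrier (fst A S))
   \<and> (\<forall>S. {x \<in> carrier (fst (F 0) S). eps S x = \<zero>\<^bsub>fst A S\<^esub>}
           = d 0 S ` carrier (fst (F 1) S))
   \<and> (\<forall>n S. {x \<in> carrier (fst (F (Suc n)) S). d n S x = \<zero>\<^bsub>fst (F n) S\<^esub>}
           = d (Suc n) S ` carrier (fst (F (Suc (Suc n))) S))"

text \<open>Ext^q(A,Y) = H^q(Hom(F_*, Y)) for a (free, hence projective) resolution F of A.
  Vanishing for q > 0: every q-cocycle is a coboundary.\<close>
definition Ext_vanishes :: "'r ring \<Rightarrow> (nat \<Rightarrow> ('r, 'a) qrep) \<Rightarrow> (nat \<Rightarrow> stratum \<Rightarrow> 'a \<Rightarrow> 'a)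
     \<Rightarrow> ('r, 'y) qrep \<Rightarrow> nat \<Rightarrow> bool" where
  "Ext_vanishes R F d Y q \<longleftrightarrow>
     (\<forall>g. is_morph R (F q) Y g
        \<and> (\<forall>S. \<forall>x \<in> carrier (fst (F (Suc q)) S). g S (d q S x) = \<zero>\<^bsub>fst Y S\<^esub>)
      \<longrightarrow> (\<exists>h. is_morph R (F (q - 1)) Y h
             \<and> (\<forall>S. \<forall>x \<in> carrier (fst (F q) S). g S x = h S (d (q - 1) S x))))"

end

theory Submission imports Defs begin

lemma hom_closed: "is_hom R M N h \<Longrightarrow> x \<in> carrier M \<Longrightarrow> h x \<in> carrier N"
  unfolding is_hom_def by auto
lemma hom_add: "is_hom R M N h \<Longrightarrow> x \<in> carrier M \<Longrightarrow> y \<in> carrier M \<Longrightarrow> h (x \<oplus>\<^bsub>M\<^esub> y) = h x \<oplus>\<^bsub>N\<^esub> h y"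
  unfolding is_hom_def by auto
lemma hom_smult: "is_hom R M N h \<Longrightarrow> a \<in> carrier R \<Longrightarrow> x \<in> carrier M \<Longrightarrow> h (a \<odot>\<^bsub>M\<^esub> x) = a \<odot>\<^bsub>N\<^esub> h x"
  unfolding is_hom_def by auto

lemma hom_zero:
  assumes "module R M" "module R N" "is_hom R M N h"
  shows "h \<zero>\<^bsub>M\<^esub> = \<zero>\<^bsub>N\<^esub>"
proof -
  interpret M: module R M by fact
  interpret N: module R N by fact
  have c: "h \<zero>\<^bsub>M\<^esub> \<in> carrier N" using hom_closed[OF assms(3)] by simp
  have "h \<zero>\<^bsub>M\<^esub> \<oplus>\<^bsub>N\<^esub> h \<zero>\<^bsub>M\<^esub> = h \<zero>\<^bsub>M\<^esub> \<oplus>\<^bsub>N\<^esub> \<zero>\<^bsub>N\<^esub>"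
    using hom_add[OF assms(3), of "\<zero>\<^bsub>M\<^esub>" "\<zero>\<^bsub>M\<^esub>"] c by simp
  then show ?thesis using c by (simp add: N.add.l_cancel)
qed

lemma hom_minus:
  assumes "module R M" "module R N" "is_hom R M N h" "x \<in> carrier M" "y \<in> carrier M"
  shows "h (x \<ominus>\<^bsub>M\<^esub> y) = h x \<ominus>\<^bsub>N\<^esub> h y"
proof -
  interpret M: module R M by fact
  interpret N: module R N by fact
  have "h (x \<ominus>\<^bsub>M\<^esub> y) \<oplus>\<^bsub>N\<^esub> h y = h x"
    using hom_add[OF assms(3), of "x \<ominus>\<^bsub>M\<^esub> y" y] assms(4,5)
    by (simp add: M.minus_eq M.add.m_assoc M.l_neg)
  moreover have "h (x \<ominus>\<^bsub>M\<^esub> y) \<in> carrier N" "h y \<in> carrier N" "h x \<in> carrier N"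
    using hom_closed[OF assms(3)] assms(4,5) by auto
  ultimately show ?thesis
    by (metis N.add.inv_solve_right N.minus_eq)
qed

lemma hom_id: "module R M \<Longrightarrow> is_hom R M M (\<lambda>x. x)"
  unfolding is_hom_def by auto

lemma hom_comp: "is_hom R M N f \<Longrightarrow> is_hom R N P g \<Longrightarrow> is_hom R M P (\<lambda>x. g (f x))"
  unfolding is_hom_def by (auto simp: Pi_def)

lemma hom_diff:
  assumes "module R M" "module R N" "is_hom R M N f" "is_hom R M N g"
  shows "is_hom R M N (\<lambda>x. f x \<ominus>\<^bsub>N\<^esub> g x)"
proof -
  interpret M: module R M by fact
  interpret N: module R N by fact
  show ?thesis
    unfolding is_hom_def
  proof (intro conjI ballI)
    show "(\<lambda>x. f x \<ominus>\<^bsub>N\<^esub> g x) \<in> carrier M \<rightarrow> carrier N"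
      using hom_closed[OF assms(3)] hom_closed[OF assms(4)] by auto
  next
    fix x y assume xy: "x \<in> carrier M" "y \<in> carrier M"
    have c: "f x \<in> carrier N" "f y \<in> carrier N" "g x \<in> carrier N" "g y \<in> carrier N"
      using hom_closed[OF assms(3)] hom_closed[OF assms(4)] xy by auto
    show "f (x \<oplus>\<^bsub>M\<^esub> y) \<ominus>\<^bsub>N\<^esub> g (x \<oplus>\<^bsub>M\<^esub> y) = f x \<ominus>\<^bsub>N\<^esub> g x \<oplus>\<^bsub>N\<^esub> (f y \<ominus>\<^bsub>N\<^esub> g y)"
      using hom_add[OF assms(3) xy] hom_add[OF assms(4) xy] c
      by (simp add: N.minus_eq N.minus_add N.a_ac)
  next
    fix a x assume ax: "a \<in> carrier R" "x \<in> carrier M"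
    have c: "f x \<in> carrier N" "g x \<in> carrier N"
      using hom_closed[OF assms(3)] hom_closed[OF assms(4)] ax by auto
    show "f (a \<odot>\<^bsub>M\<^esub> x) \<ominus>\<^bsub>N\<^esub> g (a \<odot>\<^bsub>M\<^esub> x) = a \<odot>\<^bsub>N\<^esub> (f x \<ominus>\<^bsub>N\<^esub> g x)"
      using hom_smult[OF assms(3) ax] hom_smult[OF assms(4) ax] c ax
      by (simp add: N.minus_eq N.smult_r_distr N.smult_r_minus)
  qed
qed

lemma hom_finsum:
  assumes "module R M" "module R N" "is_hom R M N h" "finite A" "f \<in> A \<rightarrow> carrier M"
  shows "h (finsum M f A) = finsum N (\<lambda>i. h (f i)) A"
  using assms(4,5)
proof (induction A rule: finite_induct)
  case empty
  then show ?case using hom_zero[OF assms(1-3)]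
    by (simp add: abelian_monoid.finsum_empty[OF module.axioms(2)[OF assms(1), THEN abelian_group.axioms(1)]]
                  abelian_monoid.finsum_empty[OF module.axioms(2)[OF assms(2), THEN abelian_group.axioms(1)]])
next
  case (insert x F)
  interpret M: module R M by fact
  interpret N: module R N by fact
  have fF: "f \<in> F \<rightarrow> carrier M" "f x \<in> carrier M" using insert by auto
  have hF: "(\<lambda>i. h (f i)) \<in> F \<rightarrow> carrier N" "h (f x) \<in> carrier N"
    using fF hom_closed[OF assms(3)] by auto
  show ?case
    using insert fF hF M.finsum_insert N.finsum_insert hom_add[OF assms(3)] M.finsum_closed
    by simp
qed

definition iscoef :: "'r ring \<Rightarrow> ('r,'a) module \<Rightarrow> 'q set \<Rightarrow> ('q \<Rightarrow> 'a) \<Rightarrow> 'a \<Rightarrow> ('q \<Rightarrow> 'r) \<Rightarrow> bool" where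
  "iscoef R M Xs b x c \<longleftrightarrow> (\<forall>p. p \<notin> Xs \<longrightarrow> c p = \<zero>\<^bsub>R\<^esub>) \<and> (\<forall>p\<in>Xs. c p \<in> carrier R)
     \<and> finite {p\<in>Xs. c p \<noteq> \<zero>\<^bsub>R\<^esub>} \<and> x = finsum M (\<lambda>p. c p \<odot>\<^bsub>M\<^esub> b p) {p\<in>Xs. c p \<noteq> \<zero>\<^bsub>R\<^esub>}"

definition basis :: "'r ring \<Rightarrow> ('r,'a) module \<Rightarrow> 'q set \<Rightarrow> ('q \<Rightarrow> 'a) \<Rightarrow> bool" where
  "basis R M Xs b \<longleftrightarrow> (\<forall>p\<in>Xs. b p \<in> carrier M) \<and> (\<forall>x\<in>carrier M. \<exists>!c. iscoef R M Xs b x c)"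

lemma sum_extend:
  assumes "module R M" "finite U" "U \<subseteq> Xs" "\<And>p. p \<in> Xs - U \<Longrightarrow> c p = \<zero>\<^bsub>R\<^esub>"
    "\<And>p. p \<in> U \<Longrightarrow> c p \<in> carrier R" "\<And>p. p \<in> U \<Longrightarrow> b p \<in> carrier M"
  shows "finsum M (\<lambda>p. c p \<odot>\<^bsub>M\<^esub> b p) {p\<in>Xs. c p \<noteq> \<zero>\<^bsub>R\<^esub>} = finsum M (\<lambda>p. c p \<odot>\<^bsub>M\<^esub> b p) U"
proof -
  interpret M: module R M by fact
  define A where "A = {p\<in>Xs. c p \<noteq> \<zero>\<^bsub>R\<^esub>}"
  have AU: "A \<subseteq> U" using assms(4) unfolding A_def by blast
  have fA: "finite A" "finite (U - A)" using AU assms(2) finite_subset by auto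
  have cl: "(\<lambda>p. c p \<odot>\<^bsub>M\<^esub> b p) \<in> A \<rightarrow> carrier M" "(\<lambda>p. c p \<odot>\<^bsub>M\<^esub> b p) \<in> U - A \<rightarrow> carrier M"
    using AU assms(5,6) by auto
  have z: "finsum M (\<lambda>p. c p \<odot>\<^bsub>M\<^esub> b p) (U - A) = finsum M (\<lambda>p. \<zero>\<^bsub>M\<^esub>) (U - A)"
    by (rule M.finsum_cong') (use assms(3,6) A_def in auto)
  have "finsum M (\<lambda>p. c p \<odot>\<^bsub>M\<^esub> b p) U = finsum M (\<lambda>p. c p \<odot>\<^bsub>M\<^esub> b p) (A \<union> (U - A))"
    using AU by (simp add: Un_absorb1)
  also have "\<dots> = finsum M (\<lambda>p. c p \<odot>\<^bsub>M\<^esub> b p) A \<oplus>\<^bsub>M\<^esub> finsum M (\<lambda>p. c p \<odot>\<^bsub>M\<^esub> b p) (U - A)"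
    by (rule M.finsum_Un_disjoint) (use fA cl in auto)
  also have "\<dots> = finsum M (\<lambda>p. c p \<odot>\<^bsub>M\<^esub> b p) A"
    using z M.finsum_zero M.finsum_closed[OF cl(1)] by simp
  finally show ?thesis unfolding A_def by simp
qed

lemma coef_some:
  assumes "basis R M Xs b" "x \<in> carrier M"
  shows "iscoef R M Xs b x (THE c. iscoef R M Xs b x c)"
proof -
  have "\<exists>!c. iscoef R M Xs b x c" using assms unfolding basis_def by blast
  then show ?thesis by (rule theI')
qed

lemma coef_eq:
  assumes "basis R M Xs b" "x \<in> carrier M" "iscoef R M Xs b x c"
  shows "(THE c. iscoef R M Xs b x c) = c"
proof -
  have "\<exists>!c. iscoef R M Xs b x c" using assms unfolding basis_def by blast
  then show ?thesis using assms(3) by (simp add: the1_equality)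
qed

lemma lift_free:
  assumes M: "module R M" and N: "module R N" and P: "module R P"
    and B: "basis R M Xs b" and f: "is_hom R N P f" and phi: "is_hom R M P \<phi>"
    and img: "\<And>x. x \<in> carrier M \<Longrightarrow> \<phi> x \<in> f ` carrier N"
  shows "\<exists>t. is_hom R M N t \<and> (\<forall>x\<in>carrier M. f (t x) = \<phi> x)"
proof -
  interpret M: module R M by fact
  interpret N: module R N by fact
  interpret P: module R P by fact
  have bc: "\<And>p. p \<in> Xs \<Longrightarrow> b p \<in> carrier M" using B unfolding basis_def by blast
  have "\<forall>p\<in>Xs. \<exists>y. y \<in> carrier N \<and> f y = \<phi> (b p)"
  proof
    fix p assume "p \<in> Xs"
    then have "\<phi> (b p) \<in> f ` carrier N" using img bc by simp
    then obtain z where "z \<in> carrier N" "\<phi> (b p) = f z" by (rule imageE)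
    then show "\<exists>y. y \<in> carrier N \<and> f y = \<phi> (b p)" by metis
  qed
  from bchoice[OF this] obtain y where y0: "\<forall>p\<in>Xs. y p \<in> carrier N \<and> f (y p) = \<phi> (b p)" by blast
  then have y: "\<And>p. p \<in> Xs \<Longrightarrow> y p \<in> carrier N \<and> f (y p) = \<phi> (b p)" by blast
  define co where "co x = (THE c. iscoef R M Xs b x c)" for x
  have co: "\<And>x. x \<in> carrier M \<Longrightarrow> iscoef R M Xs b x (co x)"
    unfolding co_def using coef_some[OF B] by blast
  have cc: "\<And>x p. x \<in> carrier M \<Longrightarrow> p \<in> Xs \<Longrightarrow> co x p \<in> carrier R"
    and cz: "\<And>x p. x \<in> carrier M \<Longrightarrow> p \<notin> Xs \<Longrightarrow> co x p = \<zero>\<^bsub>R\<^esub>"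
    and cf: "\<And>x. x \<in> carrier M \<Longrightarrow> finite {p\<in>Xs. co x p \<noteq> \<zero>\<^bsub>R\<^esub>}"
    using co unfolding iscoef_def by blast+
  have cs: "\<And>x. x \<in> carrier M \<Longrightarrow> x = finsum M (\<lambda>p. co x p \<odot>\<^bsub>M\<^esub> b p) {p\<in>Xs. co x p \<noteq> \<zero>\<^bsub>R\<^esub>}"
    using co unfolding iscoef_def by blast
  define t where "t x = finsum N (\<lambda>p. co x p \<odot>\<^bsub>N\<^esub> y p) {p\<in>Xs. co x p \<noteq> \<zero>\<^bsub>R\<^esub>}" for x
  have tU: "t x = finsum N (\<lambda>p. co x p \<odot>\<^bsub>N\<^esub> y p) U"
    if "x \<in> carrier M" "finite U" "U \<subseteq> Xs" "\<And>p. p \<in> Xs - U \<Longrightarrow> co x p = \<zero>\<^bsub>R\<^esub>" for x U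
    unfolding t_def
    by (rule sum_extend[OF N that(2,3,4)]) (use cc[OF that(1)] y that(3) in auto)
  have xU: "x = finsum M (\<lambda>p. co x p \<odot>\<^bsub>M\<^esub> b p) U"
    if "x \<in> carrier M" "finite U" "U \<subseteq> Xs" "\<And>p. p \<in> Xs - U \<Longrightarrow> co x p = \<zero>\<^bsub>R\<^esub>" for x U
  proof -
    have "x = finsum M (\<lambda>p. co x p \<odot>\<^bsub>M\<^esub> b p) {p\<in>Xs. co x p \<noteq> \<zero>\<^bsub>R\<^esub>}"
      using cs[OF that(1)] .
    also have "\<dots> = finsum M (\<lambda>p. co x p \<odot>\<^bsub>M\<^esub> b p) U"
      by (rule sum_extend[OF M that(2,3,4)]) (use cc[OF that(1)] bc that(3) in auto)
    finally show ?thesis .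
  qed
  have tc: "t x \<in> carrier N" if "x \<in> carrier M" for x
    unfolding t_def by (rule N.finsum_closed) (use that cc y in auto)
  have add: "co (x \<oplus>\<^bsub>M\<^esub> x') = (\<lambda>p. co x p \<oplus>\<^bsub>R\<^esub> co x' p)
        \<and> t (x \<oplus>\<^bsub>M\<^esub> x') = t x \<oplus>\<^bsub>N\<^esub> t x'"
    if xx: "x \<in> carrier M" "x' \<in> carrier M" for x x'
  proof -
    define U where "U = {p\<in>Xs. co x p \<noteq> \<zero>\<^bsub>R\<^esub>} \<union> {p\<in>Xs. co x' p \<noteq> \<zero>\<^bsub>R\<^esub>}"
    have U: "finite U" "U \<subseteq> Xs" using cf xx unfolding U_def by auto
    define c where "c p = co x p \<oplus>\<^bsub>R\<^esub> co x' p" for p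
    have ccU: "\<And>p. p \<in> Xs \<Longrightarrow> c p \<in> carrier R" unfolding c_def using cc xx by auto
    have cout: "\<And>p. p \<in> Xs - U \<Longrightarrow> c p = \<zero>\<^bsub>R\<^esub>" unfolding c_def U_def by auto
    have sumM: "finsum M (\<lambda>p. c p \<odot>\<^bsub>M\<^esub> b p) U = x \<oplus>\<^bsub>M\<^esub> x'"
    proof -
      have "finsum M (\<lambda>p. c p \<odot>\<^bsub>M\<^esub> b p) U
          = finsum M (\<lambda>p. co x p \<odot>\<^bsub>M\<^esub> b p \<oplus>\<^bsub>M\<^esub> co x' p \<odot>\<^bsub>M\<^esub> b p) U"
        by (rule M.finsum_cong') (use U cc bc xx in \<open>auto simp: c_def M.smult_l_distr\<close>)
      also have "\<dots> = finsum M (\<lambda>p. co x p \<odot>\<^bsub>M\<^esub> b p) U \<oplus>\<^bsub>M\<^esub> finsum M (\<lambda>p. co x' p \<odot>\<^bsub>M\<^esub> b p) U"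
        by (rule M.finsum_addf) (use U cc bc xx in auto)
      also have "\<dots> = x \<oplus>\<^bsub>M\<^esub> x'"
        using xU[OF xx(1) U] xU[OF xx(2) U] U_def by auto
      finally show ?thesis .
    qed
    have isc: "iscoef R M Xs b (x \<oplus>\<^bsub>M\<^esub> x') c"
      unfolding iscoef_def
    proof (intro conjI)
      show "\<forall>p. p \<notin> Xs \<longrightarrow> c p = \<zero>\<^bsub>R\<^esub>" using cz xx by (simp add: c_def)
      show "\<forall>p\<in>Xs. c p \<in> carrier R" using ccU by auto
      have "{p\<in>Xs. c p \<noteq> \<zero>\<^bsub>R\<^esub>} \<subseteq> U" using cout by auto
      then show "finite {p\<in>Xs. c p \<noteq> \<zero>\<^bsub>R\<^esub>}" using U finite_subset by blast
      have "finsum M (\<lambda>p. c p \<odot>\<^bsub>M\<^esub> b p) {p\<in>Xs. c p \<noteq> \<zero>\<^bsub>R\<^esub>} = finsum M (\<lambda>p. c p \<odot>\<^bsub>M\<^esub> b p) U"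
        by (rule sum_extend[OF M U]) (use cout ccU bc U in auto)
      then show "x \<oplus>\<^bsub>M\<^esub> x' = finsum M (\<lambda>p. c p \<odot>\<^bsub>M\<^esub> b p) {p\<in>Xs. c p \<noteq> \<zero>\<^bsub>R\<^esub>}"
        using sumM by simp
    qed
    have coe: "co (x \<oplus>\<^bsub>M\<^esub> x') = c"
      unfolding co_def by (rule coef_eq[OF B _ isc]) (use xx in auto)
    have "t (x \<oplus>\<^bsub>M\<^esub> x') = finsum N (\<lambda>p. c p \<odot>\<^bsub>N\<^esub> y p) U"
      using tU[of "x \<oplus>\<^bsub>M\<^esub> x'" U] xx U cout coe by auto
    also have "\<dots> = finsum N (\<lambda>p. co x p \<odot>\<^bsub>N\<^esub> y p \<oplus>\<^bsub>N\<^esub> co x' p \<odot>\<^bsub>N\<^esub> y p) U"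
      by (rule N.finsum_cong') (use U cc y xx in \<open>auto simp: c_def N.smult_l_distr\<close>)
    also have "\<dots> = finsum N (\<lambda>p. co x p \<odot>\<^bsub>N\<^esub> y p) U \<oplus>\<^bsub>N\<^esub> finsum N (\<lambda>p. co x' p \<odot>\<^bsub>N\<^esub> y p) U"
      by (rule N.finsum_addf) (use U cc y xx in auto)
    also have "\<dots> = t x \<oplus>\<^bsub>N\<^esub> t x'"
      using tU[OF xx(1) U] tU[OF xx(2) U] U_def by auto
    finally show ?thesis using coe c_def by auto
  qed
  have smul: "t (a \<odot>\<^bsub>M\<^esub> x) = a \<odot>\<^bsub>N\<^esub> t x"
    if ax: "a \<in> carrier R" "x \<in> carrier M" for a x
  proof -
    define U where "U = {p\<in>Xs. co x p \<noteq> \<zero>\<^bsub>R\<^esub>}"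
    have U: "finite U" "U \<subseteq> Xs" using cf ax unfolding U_def by auto
    define c where "c p = a \<otimes>\<^bsub>R\<^esub> co x p" for p
    have ccU: "\<And>p. p \<in> Xs \<Longrightarrow> c p \<in> carrier R" unfolding c_def using cc ax by auto
    have cout: "\<And>p. p \<in> Xs - U \<Longrightarrow> c p = \<zero>\<^bsub>R\<^esub>" unfolding c_def U_def using ax by auto
    have sumM: "finsum M (\<lambda>p. c p \<odot>\<^bsub>M\<^esub> b p) U = a \<odot>\<^bsub>M\<^esub> x"
    proof -
      have "finsum M (\<lambda>p. c p \<odot>\<^bsub>M\<^esub> b p) U
          = finsum M (\<lambda>p. a \<odot>\<^bsub>M\<^esub> (co x p \<odot>\<^bsub>M\<^esub> b p)) U"
        by (rule M.finsum_cong') (use U cc bc ax in \<open>auto simp: c_def M.smult_assoc1\<close>)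
      also have "\<dots> = a \<odot>\<^bsub>M\<^esub> finsum M (\<lambda>p. co x p \<odot>\<^bsub>M\<^esub> b p) U"
        by (rule M.finsum_smult_ldistr[symmetric]) (use U cc bc ax in auto)
      also have "\<dots> = a \<odot>\<^bsub>M\<^esub> x"
        using xU[OF ax(2) U] U_def by auto
      finally show ?thesis .
    qed
    have isc: "iscoef R M Xs b (a \<odot>\<^bsub>M\<^esub> x) c"
      unfolding iscoef_def
    proof (intro conjI)
      show "\<forall>p. p \<notin> Xs \<longrightarrow> c p = \<zero>\<^bsub>R\<^esub>" using cz ax by (simp add: c_def)
      show "\<forall>p\<in>Xs. c p \<in> carrier R" using ccU by auto
      have "{p\<in>Xs. c p \<noteq> \<zero>\<^bsub>R\<^esub>} \<subseteq> U" using cout by auto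
      then show "finite {p\<in>Xs. c p \<noteq> \<zero>\<^bsub>R\<^esub>}" using U finite_subset by blast
      have "finsum M (\<lambda>p. c p \<odot>\<^bsub>M\<^esub> b p) {p\<in>Xs. c p \<noteq> \<zero>\<^bsub>R\<^esub>} = finsum M (\<lambda>p. c p \<odot>\<^bsub>M\<^esub> b p) U"
        by (rule sum_extend[OF M U]) (use cout ccU bc U in auto)
      then show "a \<odot>\<^bsub>M\<^esub> x = finsum M (\<lambda>p. c p \<odot>\<^bsub>M\<^esub> b p) {p\<in>Xs. c p \<noteq> \<zero>\<^bsub>R\<^esub>}"
        using sumM by simp
    qed
    have coe: "co (a \<odot>\<^bsub>M\<^esub> x) = c"
      unfolding co_def by (rule coef_eq[OF B _ isc]) (use ax in auto)
    have "t (a \<odot>\<^bsub>M\<^esub> x) = finsum N (\<lambda>p. c p \<odot>\<^bsub>N\<^esub> y p) U"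
      using tU[of "a \<odot>\<^bsub>M\<^esub> x" U] ax U cout coe by auto
    also have "\<dots> = finsum N (\<lambda>p. a \<odot>\<^bsub>N\<^esub> (co x p \<odot>\<^bsub>N\<^esub> y p)) U"
      by (rule N.finsum_cong') (use U cc y ax in \<open>auto simp: c_def N.smult_assoc1\<close>)
    also have "\<dots> = a \<odot>\<^bsub>N\<^esub> finsum N (\<lambda>p. co x p \<odot>\<^bsub>N\<^esub> y p) U"
      by (rule N.finsum_smult_ldistr[symmetric]) (use U cc y ax in auto)
    also have "\<dots> = a \<odot>\<^bsub>N\<^esub> t x"
      using tU[OF ax(2) U] U_def by auto
    finally show ?thesis .
  qed
  have th: "is_hom R M N t"
    unfolding is_hom_def using tc add smul by auto
  have "f (t x) = \<phi> x" if x: "x \<in> carrier M" for x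
  proof -
    define U where "U = {p\<in>Xs. co x p \<noteq> \<zero>\<^bsub>R\<^esub>}"
    have U: "finite U" "U \<subseteq> Xs" using cf x unfolding U_def by auto
    have "f (t x) = finsum P (\<lambda>p. f (co x p \<odot>\<^bsub>N\<^esub> y p)) U"
      unfolding t_def U_def[symmetric]
      by (rule hom_finsum[OF N P f U(1)]) (use U cc y x in auto)
    also have "\<dots> = finsum P (\<lambda>p. \<phi> (co x p \<odot>\<^bsub>M\<^esub> b p)) U"
      by (rule P.finsum_cong') (use U cc y x bc hom_smult[OF f] hom_smult[OF phi] hom_closed[OF phi] in auto)
    also have "\<dots> = \<phi> (finsum M (\<lambda>p. co x p \<odot>\<^bsub>M\<^esub> b p) U)"
      by (rule hom_finsum[OF M P phi U(1), symmetric]) (use U cc bc x in auto)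
    also have "\<dots> = \<phi> x" using xU[OF x U] U_def by auto
    finally show ?thesis .
  qed
  then show ?thesis using th by blast
qed


lemma Rmod_simps: "carrier (Rmod R) = carrier R" "x \<oplus>\<^bsub>Rmod R\<^esub> y = x \<oplus>\<^bsub>R\<^esub> y" "\<zero>\<^bsub>Rmod R\<^esub> = \<zero>\<^bsub>R\<^esub>"
  "a \<odot>\<^bsub>Rmod R\<^esub> x = a \<otimes>\<^bsub>R\<^esub> x"
  by (simp_all add: Rmod_def ring.defs module.defs)
lemma Zmod_simps: "carrier (Zmod R) = {\<zero>\<^bsub>R\<^esub>}" "x \<oplus>\<^bsub>Zmod R\<^esub> y = x \<oplus>\<^bsub>R\<^esub> y" "\<zero>\<^bsub>Zmod R\<^esub> = \<zero>\<^bsub>R\<^esub>"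
  "a \<odot>\<^bsub>Zmod R\<^esub> x = a \<otimes>\<^bsub>R\<^esub> x"
  by (simp_all add: Zmod_def Rmod_def ring.defs module.defs)

lemma Rmod_module: assumes "cring R" shows "module R (Rmod R)"
proof -
  interpret cring R by fact
  show ?thesis
    apply (rule moduleI[OF assms])
         apply (rule abelian_groupI)
              apply (auto simp: Rmod_simps a_ac m_assoc l_distr r_distr)
    done
qed

lemma arrow_sleq_trans: "arrow V W \<Longrightarrow> sleq W T \<Longrightarrow> sleq V T"
  by (cases V; cases W; cases T) (auto simp: sleq_def arrow_def)
lemma arrow_irrefl: "\<not> arrow V V"
  by (cases V) (auto simp: arrow_def)
lemma arrow_trans: "arrow V W \<Longrightarrow> arrow W U \<Longrightarrow> arrow V U"
  by (cases V; cases W; cases U) (auto simp: arrow_def)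

lemma path_hom:
  assumes "is_rep R F" "sleq V T"
  shows "is_hom R (fst F V) (fst F T) (path_map F V T)"
proof (cases "V = T")
  case True
  then show ?thesis using assms hom_id[of R "fst F T"] unfolding is_rep_def path_map_def
    by (simp add: is_hom_def)
next
  case False
  then have "arrow V T" using assms(2) by (simp add: sleq_def)
  then show ?thesis using assms(1) False unfolding is_rep_def path_map_def is_hom_def by simp
qed

lemma free_basis:
  assumes "is_rep R F" "is_free_on R F B"
  shows "basis R (fst F T) {p\<in>B. sleq (fst p) T} (\<lambda>p. path_map F (fst p) T (snd p))"
proof -
  have se: "\<And>c. {p \<in> {p\<in>B. sleq (fst p) T}. c p \<noteq> \<zero>\<^bsub>R\<^esub>} = {p\<in>B. sleq (fst p) T \<and> c p \<noteq> \<zero>\<^bsub>R\<^esub>}"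
    by auto
  have bc: "\<forall>p\<in>{p\<in>B. sleq (fst p) T}. path_map F (fst p) T (snd p) \<in> carrier (fst F T)"
  proof
    fix p assume p: "p \<in> {p\<in>B. sleq (fst p) T}"
    then have "snd p \<in> carrier (fst F (fst p))" using assms(2) unfolding is_free_on_def by blast
    then show "path_map F (fst p) T (snd p) \<in> carrier (fst F T)"
      using hom_closed[OF path_hom[OF assms(1)]] p by blast
  qed
  have "\<forall>x\<in>carrier (fst F T). \<exists>!c. iscoef R (fst F T) {p\<in>B. sleq (fst p) T} (\<lambda>p. path_map F (fst p) T (snd p)) x c"
    unfolding iscoef_def se using assms(2) unfolding is_free_on_def by blast
  then show ?thesis using bc unfolding basis_def by blast
qed


lemma splitting:
  fixes M :: "nat \<Rightarrow> ('r,'a) module" and \<delta> :: "nat \<Rightarrow> 'a \<Rightarrow> 'a" and K :: "nat \<Rightarrow> 'a set"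
  assumes mods: "\<And>n. module R (M n)"
    and homs: "\<And>n. is_hom R (M (Suc n)) (M n) (\<delta> n)"
    and free: "\<And>n. \<exists>(Xs::'q set) b. basis R (M n) Xs b"
    and Kdef: "\<And>n. K (Suc n) = {x\<in>carrier (M (Suc n)). \<delta> n x = \<zero>\<^bsub>M n\<^esub>}"
    and exact: "\<And>n. K n = \<delta> n ` carrier (M (Suc n))"
    and base: "\<exists>r. is_hom R (M 0) (M 0) r \<and> (\<forall>x\<in>carrier (M 0). r x \<in> K 0) \<and> (\<forall>x\<in>K 0. r x = x)"
  shows "\<exists>r. is_hom R (M n) (M n) r \<and> (\<forall>x\<in>carrier (M n). r x \<in> K n) \<and> (\<forall>x\<in>K n. r x = x)"
proof (induction n)
  case 0
  then show ?case using base .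
next
  case (Suc n)
  then obtain r where r: "is_hom R (M n) (M n) r" "\<And>x. x \<in> carrier (M n) \<Longrightarrow> r x \<in> K n"
      "\<And>x. x \<in> K n \<Longrightarrow> r x = x" by blast
  obtain Xs :: "'q set" and b where B: "basis R (M n) Xs b" using free by blast
  have "\<exists>t. is_hom R (M n) (M (Suc n)) t \<and> (\<forall>x\<in>carrier (M n). \<delta> n (t x) = r x)"
    by (rule lift_free[OF mods mods mods B homs r(1)]) (use r(2) exact in blast)
  then obtain t where t: "is_hom R (M n) (M (Suc n)) t" "\<And>x. x \<in> carrier (M n) \<Longrightarrow> \<delta> n (t x) = r x"
    by blast
  interpret Mn: module R "M n" by (rule mods)
  interpret MS: module R "M (Suc n)" by (rule mods)
  define r' where "r' x = x \<ominus>\<^bsub>M (Suc n)\<^esub> t (\<delta> n x)" for x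
  have h: "is_hom R (M (Suc n)) (M (Suc n)) r'"
    unfolding r'_def by (rule hom_diff[OF mods mods hom_id[OF mods] hom_comp[OF homs t(1)]])
  have in1: "r' x \<in> K (Suc n)" if x: "x \<in> carrier (M (Suc n))" for x
  proof -
    have dx: "\<delta> n x \<in> carrier (M n)" using hom_closed[OF homs x] .
    have dK: "\<delta> n x \<in> K n" using exact x by blast
    have tc: "t (\<delta> n x) \<in> carrier (M (Suc n))" using hom_closed[OF t(1) dx] .
    have "\<delta> n (r' x) = \<delta> n x \<ominus>\<^bsub>M n\<^esub> \<delta> n (t (\<delta> n x))"
      unfolding r'_def by (rule hom_minus[OF mods mods homs x tc])
    also have "\<dots> = \<delta> n x \<ominus>\<^bsub>M n\<^esub> \<delta> n x" using t(2)[OF dx] r(3)[OF dK] by simp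
    also have "\<dots> = \<zero>\<^bsub>M n\<^esub>" using dx by (simp add: Mn.r_neg Mn.minus_eq)
    finally show ?thesis using Kdef hom_closed[OF h x] by blast
  qed
  have id1: "r' x = x" if x: "x \<in> K (Suc n)" for x
  proof -
    have xc: "x \<in> carrier (M (Suc n))" and dx: "\<delta> n x = \<zero>\<^bsub>M n\<^esub>" using x Kdef by auto
    have "t (\<delta> n x) = \<zero>\<^bsub>M (Suc n)\<^esub>" using dx hom_zero[OF mods mods t(1)] by simp
    then show ?thesis unfolding r'_def using xc by (simp add: MS.minus_eq)
  qed
  show ?case using h in1 id1 by blast
qed


lemma ag_minus_eq0:
  fixes G (structure)
  assumes "abelian_group G" "a \<in> carrier G" "b \<in> carrier G" "a \<ominus>\<^bsub>G\<^esub> b = \<zero>\<^bsub>G\<^esub>"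
  shows "a = b"
proof -
  interpret abelian_group G by fact
  have "a = (a \<ominus> b) \<oplus> b" using assms(2,3) by (simp add: minus_eq a_assoc l_neg)
  then show ?thesis using assms(3,4) by simp
qed

lemma vertex_ext:
  assumes cR: "cring R" and MQ: "module R MQ" and MM: "module R MM"
    and dl: "is_hom R MQ MM \<delta>" and rh: "is_hom R MM MM r"
    and rin: "\<And>y. y \<in> carrier MM \<Longrightarrow> r y \<in> \<delta> ` carrier MQ"
    and rid: "\<And>x. x \<in> carrier MQ \<Longrightarrow> r (\<delta> x) = \<delta> x"
    and g: "is_hom R MQ (Rmod R) g"
    and van: "\<And>x. x \<in> carrier MQ \<Longrightarrow> \<delta> x = \<zero>\<^bsub>MM\<^esub> \<Longrightarrow> g x = \<zero>\<^bsub>R\<^esub>"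
  shows "\<exists>h. is_hom R MM (Rmod R) h \<and> (\<forall>x\<in>carrier MQ. g x = h (\<delta> x))"
proof -
  interpret R: cring R by fact
  interpret MQ: module R MQ by fact
  interpret MM: module R MM by fact
  have RM: "module R (Rmod R)" by (rule Rmod_module[OF cR])
  have gc: "\<And>x. x \<in> carrier MQ \<Longrightarrow> g x \<in> carrier R" using hom_closed[OF g] by (simp add: Rmod_simps)
  have wd: "g x1 = g x2" if "x1 \<in> carrier MQ" "x2 \<in> carrier MQ" "\<delta> x1 = \<delta> x2" for x1 x2
  proof -
    have "\<delta> (x1 \<ominus>\<^bsub>MQ\<^esub> x2) = \<zero>\<^bsub>MM\<^esub>"
      using hom_minus[OF MQ MM dl that(1,2)] that hom_closed[OF dl] by (simp add: MM.r_neg MM.minus_eq)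
    then have z: "g (x1 \<ominus>\<^bsub>MQ\<^esub> x2) = \<zero>\<^bsub>R\<^esub>" using van that by simp
    have "g (x1 \<ominus>\<^bsub>MQ\<^esub> x2) = g x1 \<ominus>\<^bsub>Rmod R\<^esub> g x2" by (rule hom_minus[OF MQ RM g that(1,2)])
    then have "g x1 \<ominus>\<^bsub>Rmod R\<^esub> g x2 = \<zero>\<^bsub>Rmod R\<^esub>" using z by (simp add: Rmod_simps)
    moreover have "g x1 \<in> carrier (Rmod R)" "g x2 \<in> carrier (Rmod R)" using gc that by (simp_all add: Rmod_simps)
    ultimately show ?thesis
      using ag_minus_eq0[OF module.axioms(2)[OF RM]] by blast
  qed
  define ch where "ch y = (SOME x. x \<in> carrier MQ \<and> \<delta> x = r y)" for y
  have ch: "ch y \<in> carrier MQ \<and> \<delta> (ch y) = r y" if "y \<in> carrier MM" for y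
  proof -
    from rin[OF that] obtain x where "x \<in> carrier MQ" "\<delta> x = r y" by auto
    then show ?thesis unfolding ch_def by (rule someI[where x = x, OF conjI])
  qed
  define h where "h y = g (ch y)" for y
  have hh: "is_hom R MM (Rmod R) h"
    unfolding is_hom_def
  proof (intro conjI ballI)
    show "h \<in> carrier MM \<rightarrow> carrier (Rmod R)" using ch hom_closed[OF g] unfolding h_def by auto
  next
    fix y1 y2 assume y: "y1 \<in> carrier MM" "y2 \<in> carrier MM"
    have c: "ch y1 \<in> carrier MQ" "ch y2 \<in> carrier MQ" "ch (y1 \<oplus>\<^bsub>MM\<^esub> y2) \<in> carrier MQ"
      using ch y by auto
    have "\<delta> (ch (y1 \<oplus>\<^bsub>MM\<^esub> y2)) = \<delta> (ch y1 \<oplus>\<^bsub>MQ\<^esub> ch y2)"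
      using ch y hom_add[OF dl c(1,2)] hom_add[OF rh y] by simp
    then have "g (ch (y1 \<oplus>\<^bsub>MM\<^esub> y2)) = g (ch y1 \<oplus>\<^bsub>MQ\<^esub> ch y2)"
      by (intro wd) (use c in auto)
    then show "h (y1 \<oplus>\<^bsub>MM\<^esub> y2) = h y1 \<oplus>\<^bsub>Rmod R\<^esub> h y2"
      unfolding h_def using hom_add[OF g c(1,2)] by simp
  next
    fix a y assume ay: "a \<in> carrier R" "y \<in> carrier MM"
    have c: "ch y \<in> carrier MQ" "ch (a \<odot>\<^bsub>MM\<^esub> y) \<in> carrier MQ"
      using ch ay by auto
    have "\<delta> (ch (a \<odot>\<^bsub>MM\<^esub> y)) = \<delta> (a \<odot>\<^bsub>MQ\<^esub> ch y)"
      using ch ay hom_smult[OF dl ay(1) c(1)] hom_smult[OF rh ay] by simp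
    then have "g (ch (a \<odot>\<^bsub>MM\<^esub> y)) = g (a \<odot>\<^bsub>MQ\<^esub> ch y)"
      by (intro wd) (use c ay in auto)
    then show "h (a \<odot>\<^bsub>MM\<^esub> y) = a \<odot>\<^bsub>Rmod R\<^esub> h y"
      unfolding h_def using hom_smult[OF g ay(1) c(1)] by simp
  qed
  have "g x = h (\<delta> x)" if x: "x \<in> carrier MQ" for x
  proof -
    have dx: "\<delta> x \<in> carrier MM" using hom_closed[OF dl x] .
    have "\<delta> (ch (\<delta> x)) = \<delta> x" using ch[OF dx] rid[OF x] by simp
    then have "g (ch (\<delta> x)) = g x" by (intro wd) (use ch[OF dx] x in auto)
    then show ?thesis unfolding h_def by simp
  qed
  then show ?thesis using hh by blast
qed

theorem lemma5p3:
  fixes R :: "'r ring"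
    and S T :: stratum
    and F :: "nat \<Rightarrow> ('r, 'a) qrep"
    and d :: "nat \<Rightarrow> stratum \<Rightarrow> 'a \<Rightarrow> 'a"
    and eps :: "stratum \<Rightarrow> 'a \<Rightarrow> 'r"
    and q :: nat
  assumes "principal_domain R"
    and "free_resolution R (I_rep R S) F d eps"
    and "q > 0"
  shows "Ext_vanishes R F d (I_rep R T) q"
proof -
  have cR: "cring R" using assms(1) principal_domain.axioms(1) domain.axioms(1) by blast
  interpret R: cring R by (rule cR)
  have RM: "module R (Rmod R)" by (rule Rmod_module[OF cR])
  note FR = assms(2)[unfolded free_resolution_def]
  note c1 = FR[THEN conjunct1] and c2 = FR[THEN conjunct2, THEN conjunct1]
    and c3 = FR[THEN conjunct2, THEN conjunct2, THEN conjunct1]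
    and c4 = FR[THEN conjunct2, THEN conjunct2, THEN conjunct2, THEN conjunct1]
    and c5 = FR[THEN conjunct2, THEN conjunct2, THEN conjunct2, THEN conjunct2, THEN conjunct1]
    and c6 = FR[THEN conjunct2, THEN conjunct2, THEN conjunct2, THEN conjunct2, THEN conjunct2]
  have rep: "\<And>n. is_rep R (F n)" and free: "\<And>n. \<exists>B. is_free_on R (F n) B"
    using c1 by simp_all
  have dm: "\<And>n. is_morph R (F (Suc n)) (F n) (d n)" using c2 by simp
  have em: "is_morph R (F 0) (I_rep R S) eps" using c3 .
  have esurj: "\<And>V. eps V ` carrier (fst (F 0) V) = carrier (fst (I_rep R S) V)" using c4 by (rule spec)
  have ex0: "\<And>V. {x\<in>carrier (fst (F 0) V). eps V x = \<zero>\<^bsub>fst (I_rep R S) V\<^esub>} = d 0 V ` carrier (fst (F 1) V)"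
    using c5 by (rule spec)
  have exS: "\<And>n V. {x \<in> carrier (fst (F (Suc n)) V). d n V x = \<zero>\<^bsub>fst (F n) V\<^esub>}
           = d (Suc n) V ` carrier (fst (F (Suc (Suc n))) V)"
    using c6 by blast
  define M where "M n = fst (F n) T" for n
  define \<delta> where "\<delta> n = d n T" for n
  define K where "K n = \<delta> n ` carrier (M (Suc n))" for n
  have mods: "\<And>n. module R (M n)" using rep unfolding is_rep_def M_def by blast
  have homs: "\<And>n. is_hom R (M (Suc n)) (M n) (\<delta> n)" using dm unfolding is_morph_def M_def \<delta>_def by blast
  have freeM: "\<And>n. \<exists>(Xs::(stratum \<times> 'a) set) b. basis R (M n) Xs b"
  proof -
    fix n
    obtain B where "is_free_on R (F n) B" using free by blast
    then show "\<exists>(Xs::(stratum \<times> 'a) set) b. basis R (M n) Xs b"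
      using free_basis[OF rep] unfolding M_def by blast
  qed
  have Kdef: "\<And>n. K (Suc n) = {x\<in>carrier (M (Suc n)). \<delta> n x = \<zero>\<^bsub>M n\<^esub>}"
    by (simp add: K_def M_def \<delta>_def exS)
  have exact: "\<And>n. K n = \<delta> n ` carrier (M (Suc n))" by (simp add: K_def)
  have K0: "K 0 = {x\<in>carrier (M 0). eps T x = \<zero>\<^bsub>fst (I_rep R S) T\<^esub>}"
    using ex0[of T] by (simp add: K_def M_def \<delta>_def)
  have eh: "is_hom R (M 0) (fst (I_rep R S) T) (eps T)" using em unfolding is_morph_def M_def by blast
  interpret M0: module R "M 0" by (rule mods)
  have base: "\<exists>r. is_hom R (M 0) (M 0) r \<and> (\<forall>x\<in>carrier (M 0). r x \<in> K 0) \<and> (\<forall>x\<in>K 0. r x = x)"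
  proof (cases "sleq T S")
    case True
    have A: "fst (I_rep R S) T = Rmod R" by (simp add: I_rep_def True)
    have "\<one>\<^bsub>R\<^esub> \<in> eps T ` carrier (M 0)" using esurj[of T] A by (simp add: M_def Rmod_simps)
    then obtain x0 where x0: "x0 \<in> carrier (M 0)" "eps T x0 = \<one>\<^bsub>R\<^esub>" by auto
    have ec: "\<And>x. x \<in> carrier (M 0) \<Longrightarrow> eps T x \<in> carrier R"
      using hom_closed[OF eh] A by (simp add: Rmod_simps)
    have g2: "is_hom R (M 0) (M 0) (\<lambda>x. eps T x \<odot>\<^bsub>M 0\<^esub> x0)"
      unfolding is_hom_def
    proof (intro conjI ballI)
      show "(\<lambda>x. eps T x \<odot>\<^bsub>M 0\<^esub> x0) \<in> carrier (M 0) \<rightarrow> carrier (M 0)" using ec x0 by auto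
    next
      fix x y assume xy: "x \<in> carrier (M 0)" "y \<in> carrier (M 0)"
      have "eps T (x \<oplus>\<^bsub>M 0\<^esub> y) = eps T x \<oplus>\<^bsub>R\<^esub> eps T y" using hom_add[OF eh xy] A by (simp add: Rmod_simps)
      then show "eps T (x \<oplus>\<^bsub>M 0\<^esub> y) \<odot>\<^bsub>M 0\<^esub> x0 = eps T x \<odot>\<^bsub>M 0\<^esub> x0 \<oplus>\<^bsub>M 0\<^esub> eps T y \<odot>\<^bsub>M 0\<^esub> x0"
        using ec xy x0 by (simp add: M0.smult_l_distr)
    next
      fix a x assume ax: "a \<in> carrier R" "x \<in> carrier (M 0)"
      have "eps T (a \<odot>\<^bsub>M 0\<^esub> x) = a \<otimes>\<^bsub>R\<^esub> eps T x" using hom_smult[OF eh ax] A by (simp add: Rmod_simps)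
      then show "eps T (a \<odot>\<^bsub>M 0\<^esub> x) \<odot>\<^bsub>M 0\<^esub> x0 = a \<odot>\<^bsub>M 0\<^esub> (eps T x \<odot>\<^bsub>M 0\<^esub> x0)"
        using ec ax x0 by (simp add: M0.smult_assoc1)
    qed
    define r where "r x = x \<ominus>\<^bsub>M 0\<^esub> (eps T x \<odot>\<^bsub>M 0\<^esub> x0)" for x
    have rh: "is_hom R (M 0) (M 0) r"
      unfolding r_def by (rule hom_diff[OF mods mods hom_id[OF mods] g2])
    have rK: "r x \<in> K 0" if x: "x \<in> carrier (M 0)" for x
    proof -
      interpret A: module R "Rmod R" by (rule RM)
      have eh': "is_hom R (M 0) (Rmod R) (eps T)" using eh A by simp
      have c: "eps T x \<odot>\<^bsub>M 0\<^esub> x0 \<in> carrier (M 0)" using ec x x0 by auto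
      have e2: "eps T (eps T x \<odot>\<^bsub>M 0\<^esub> x0) = eps T x"
        using hom_smult[OF eh' ec[OF x] x0(1)] x0(2) ec[OF x] by (simp add: Rmod_simps)
      have "eps T (r x) = eps T x \<ominus>\<^bsub>Rmod R\<^esub> eps T x"
        unfolding r_def using hom_minus[OF mods RM eh' x c] e2 by simp
      also have "\<dots> = \<zero>\<^bsub>Rmod R\<^esub>"
      proof -
        have ca: "eps T x \<in> carrier (Rmod R)" using ec[OF x] by (simp add: Rmod_simps)
        show ?thesis using A.r_neg[OF ca] A.minus_eq[of "eps T x" "eps T x"] by simp
      qed
      finally show ?thesis using K0 A hom_closed[OF rh x] by simp
    qed
    have rid: "r x = x" if x: "x \<in> K 0" for x
    proof -
      have xc: "x \<in> carrier (M 0)" and "eps T x = \<zero>\<^bsub>R\<^esub>" using x K0 A by (auto simp: Rmod_simps)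
      then show ?thesis unfolding r_def using x0 by (simp add: M0.minus_eq)
    qed
    show ?thesis using rh rK rid by blast
  next
    case False
    have A: "fst (I_rep R S) T = Zmod R" by (simp add: I_rep_def False)
    have "K 0 = carrier (M 0)"
      using K0 A hom_closed[OF eh] by (auto simp: Zmod_simps)
    then show ?thesis using hom_id[OF mods] by auto
  qed
  obtain m where q: "q = Suc m" using assms(3) gr0_implies_Suc by blast
  obtain r where r: "is_hom R (M m) (M m) r" "\<And>x. x \<in> carrier (M m) \<Longrightarrow> r x \<in> K m"
      "\<And>x. x \<in> K m \<Longrightarrow> r x = x"
    using splitting[OF mods homs freeM Kdef exact base, of m] by blast
  have Y1: "\<And>V. fst (I_rep R T) V = (if sleq V T then Rmod R else Zmod R)" by (simp add: I_rep_def)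
  have Y2: "\<And>V W. snd (I_rep R T) V W = (if sleq V T \<and> sleq W T then (\<lambda>x. x) else (\<lambda>x. \<zero>\<^bsub>R\<^esub>))"
    by (simp add: I_rep_def)
  have TT: "sleq T T" by (simp add: sleq_def)
  show ?thesis
    unfolding Ext_vanishes_def q diff_Suc_1
  proof (intro allI impI, elim conjE)
    fix g assume g: "is_morph R (F (Suc m)) (I_rep R T) g"
      and van: "\<forall>S. \<forall>x\<in>carrier (fst (F (Suc (Suc m))) S). g S (d (Suc m) S x) = \<zero>\<^bsub>fst (I_rep R T) S\<^esub>"
    have gT: "is_hom R (M (Suc m)) (Rmod R) (g T)"
    proof -
      have "is_hom R (fst (F (Suc m)) T) (fst (I_rep R T) T) (g T)" using g unfolding is_morph_def by blast
      then show ?thesis using Y1[of T] TT by (simp add: M_def)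
    qed
    have "\<exists>hT. is_hom R (M m) (Rmod R) hT \<and> (\<forall>x\<in>carrier (M (Suc m)). g T x = hT (\<delta> m x))"
    proof (rule vertex_ext[OF cR mods mods homs r(1) _ _ gT])
      show "\<And>y. y \<in> carrier (M m) \<Longrightarrow> r y \<in> \<delta> m ` carrier (M (Suc m))" using r(2) exact by blast
      show "\<And>x. x \<in> carrier (M (Suc m)) \<Longrightarrow> r (\<delta> m x) = \<delta> m x" using r(3) exact by blast
    next
      fix x assume x: "x \<in> carrier (M (Suc m))" "\<delta> m x = \<zero>\<^bsub>M m\<^esub>"
      then have "x \<in> K (Suc m)" using Kdef by blast
      then obtain z where z: "z \<in> carrier (M (Suc (Suc m)))" "x = \<delta> (Suc m) z" using exact by blast
      then show "g T x = \<zero>\<^bsub>R\<^esub>" using van Y1[of T] TT unfolding M_def \<delta>_def by (simp add: Rmod_simps)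
    qed
    then obtain hT where hT: "is_hom R (M m) (Rmod R) hT" "\<And>x. x \<in> carrier (M (Suc m)) \<Longrightarrow> g T x = hT (\<delta> m x)"
      by blast
    define h where "h V y = (if sleq V T then hT (path_map (F m) V T y) else \<zero>\<^bsub>R\<^esub>)" for V y
    have p1: "is_hom R (fst (F m) V) (fst (I_rep R T) V) (h V)" for V
    proof (cases "sleq V T")
      case True
      have "is_hom R (fst (F m) V) (Rmod R) (\<lambda>y. hT (path_map (F m) V T y))"
        using hom_comp[OF path_hom[OF rep True] hT(1)[unfolded M_def]] .
      then show ?thesis using True Y1 unfolding h_def by simp
    next
      case False
      show ?thesis using False Y1[of V] unfolding h_def is_hom_def by (simp add: Zmod_simps)
    qed
    have p2: "h W (snd (F m) V W x) = snd (I_rep R T) V W (h V x)"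
      if a: "arrow V W" and x: "x \<in> carrier (fst (F m) V)" for V W x
    proof (cases "sleq W T")
      case True
      then have VT: "sleq V T" using arrow_sleq_trans a by blast
      have VnT: "V \<noteq> T"
      proof
        assume "V = T"
        then have "arrow T W" "sleq W T" using a True by auto
        then show False using arrow_irrefl arrow_trans unfolding sleq_def by blast
      qed
      have "path_map (F m) W T (snd (F m) V W x) = path_map (F m) V T x"
      proof (cases "W = T")
        case True then show ?thesis using VnT by (simp add: path_map_def)
      next
        case False
        then have "arrow W T" using \<open>sleq W T\<close> by (simp add: sleq_def)
        then show ?thesis using rep[of m] a x False VnT unfolding is_rep_def path_map_def by auto
      qed
      then show ?thesis using True VT Y2 unfolding h_def by simp
    next
      case False
      then show ?thesis using Y2 unfolding h_def by simp
    qed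
    have p3: "g V x = h V (d m V x)" if x: "x \<in> carrier (fst (F (Suc m)) V)" for V x
    proof (cases "sleq V T")
      case True
      show ?thesis
      proof (cases "V = T")
        case True
        then show ?thesis using hT(2) x TT unfolding h_def M_def \<delta>_def path_map_def by simp
      next
        case False
        then have a: "arrow V T" using \<open>sleq V T\<close> by (simp add: sleq_def)
        have xc: "snd (F (Suc m)) V T x \<in> carrier (M (Suc m))"
          using rep[of "Suc m"] a x unfolding is_rep_def is_hom_def M_def by blast
        have "g T (snd (F (Suc m)) V T x) = g V x"
          using g a x Y2 TT \<open>sleq V T\<close> unfolding is_morph_def by auto
        moreover have "d m T (snd (F (Suc m)) V T x) = snd (F m) V T (d m V x)"
          using dm[of m] a x unfolding is_morph_def by blast
        ultimately show ?thesis
          using hT(2)[OF xc] \<open>sleq V T\<close> False unfolding h_def \<delta>_def path_map_def by simp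
      qed
    next
      case False
      have "g V x \<in> carrier (fst (I_rep R T) V)" using g x unfolding is_morph_def is_hom_def by blast
      then show ?thesis using False Y1[of V] unfolding h_def by (simp add: Zmod_simps)
    qed
    show "\<exists>h. is_morph R (F m) (I_rep R T) h \<and> (\<forall>S. \<forall>x\<in>carrier (fst (F (Suc m)) S). g S x = h S (d m S x))"
      using p1 p2 p3 unfolding is_morph_def by blast
  qed
qed

end
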